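(* Let $c_0>0$, $c>0$, $q\in\mathbb Z^+$, and let $\boldsymbol\beta=(\beta_j)_{j\ge1}$ and $(\Upsilon_{\boldsymbol\nu})_{\boldsymbol\nu\in\mathscr F}$ be sequences of non-negative reals such that $\Upsilon_{\boldsymbol 0}\le c_0$ and, for all $\boldsymbol\nu\in\mathscr F\setminus\{\boldsymbol 0\}$, $$\Upsilon_{\boldsymbol\nu}\le\sum_{\substack{\boldsymbol 0\ne\boldsymbol m\le\boldsymbol\nu\\|{\rm supp}(\boldsymbol m)|\le q}}c^{|\boldsymbol m|}\binom{\boldsymbol\nu}{\boldsymbol m}\Upsilon_{\boldsymbol\nu-\boldsymbol m}\prod_{j\in{\rm supp}(\boldsymbol m)}\beta_j.$$ Then for all $\boldsymbol\nu\in\mathscr F$, $$\Upsilon_{\boldsymbol\nu}\le c_0c^{|\boldsymbol\nu|}\sum_{\boldsymbol m\le\boldsymbol\nu}\boldsymbol m!\,D_q(\boldsymbol m)\,\boldsymbol\beta^{\boldsymbol m}\prod_{i\ge1}S(\nu_i,m_i),$$ where $D_q(\boldsymbol 0):=1$ and $D_q(\boldsymbol m):=\sum_{\mathfrak u\subseteq{\rm supp}(\boldsymbol m),\,0\ne|\mathfrak u|\le q}D_q(\boldsymbol m-\boldsymbol e_{\mathfrak u})$ for $\boldsymbol m\ne\boldsymbol 0$, with $\boldsymbol e_{\mathfrak u}:=\sum_{j\in\mathfrak u}\boldsymbol e_j$. If all the hypothesized inequalities are equalities, so is the conclusion. The result also holds with $q=\infty$ (no bounds on $|{\rm supp}(\boldsymbol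 m)|$ and $|\mathfrak u|$).
   Context: $\mathscr F$ is the set of finitely supported multi-indices in $\mathbb N_0^{\mathbb N}$; ${\rm supp}(\boldsymbol\nu)=\{j:\nu_j\ne0\}$, $|\boldsymbol\nu|=\sum\nu_j$, $\boldsymbol\nu!=\prod\nu_j!$, $\boldsymbol\beta^{\boldsymbol\nu}=\prod\beta_j^{\nu_j}$, $\boldsymbol m\le\boldsymbol\nu$ componentwise, $\binom{\boldsymbol\nu}{\boldsymbol m}=\prod_j\binom{\nu_j}{m_j}$, $\boldsymbol e_j$ the $j$th unit multi-index. $S(n,m)=\frac1{m!}\sum_{j=0}^m(-1)^{m-j}\binom mj j^n$ for $n\ge m\ge0$ (Stirling numbers of the second kind, $S(0,0)=1$). *)

theory Defs
  imports Complex_Main "HOL-Library.Extended_Nat" "HOL-Combinatorics.Stirling"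
begin

text \<open>Multi-indices: functions nat => nat; the coordinate j of the paper
(j >= 1) is coordinate j-1 here. Finitely supported ones form the set F.\<close>

type_synonym mi = "nat \<Rightarrow> nat"

definition supp :: "mi \<Rightarrow> nat set" where
  "supp \<nu> = {j. \<nu> j \<noteq> 0}"

definition finsupp :: "mi \<Rightarrow> bool" where
  "finsupp \<nu> \<longleftrightarrow> finite (supp \<nu>)"

definition msize :: "mi \<Rightarrow> nat" where
  "msize \<nu> = (\<Sum>j\<in>supp \<nu>. \<nu> j)"

definition mle :: "mi \<Rightarrow> mi \<Rightarrow> bool" where
  "mle m \<nu> \<longleftrightarrow> (\<forall>j. m j \<le> \<nu> j)"

definition mfact :: "mi \<Rightarrow> real" where
  "mfact m = (\<Prod>j\<in>supp m. fact (m j))"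

definition mpow :: "(nat \<Rightarrow> real) \<Rightarrow> mi \<Rightarrow> real" where
  "mpow \<beta> m = (\<Prod>j\<in>supp m. \<beta> j ^ m j)"

definition mbinom :: "mi \<Rightarrow> mi \<Rightarrow> real" where
  "mbinom \<nu> m = (\<Prod>j\<in>supp \<nu>. real (\<nu> j choose m j))"

definition msub :: "mi \<Rightarrow> mi \<Rightarrow> mi" where
  "msub \<nu> m = (\<lambda>j. \<nu> j - m j)"

definition eset :: "nat set \<Rightarrow> mi" where
  "eset u = (\<lambda>j. if j \<in> u then 1 else 0)"

text \<open>D_q(m) (q :: enat, q = \<infinity> meaning no bound), defined by the paper's
recursion. The recursion is run with a fuel argument that is an upper bound
for |m|; since |m - e_u| < |m| for nonempty u \<subseteq> supp m, the fuel
|m| suffices and the result is exactly the paper's recursion.\<close>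

fun Dfuel :: "enat \<Rightarrow> nat \<Rightarrow> mi \<Rightarrow> real" where
  "Dfuel q 0 m = 1"
| "Dfuel q (Suc n) m =
     (if m = (\<lambda>_. 0) then 1
      else (\<Sum>u\<in>{u. u \<subseteq> supp m \<and> u \<noteq> {} \<and> enat (card u) \<le> q}.
              Dfuel q n (msub m (eset u))))"

definition Dq :: "enat \<Rightarrow> mi \<Rightarrow> real" where
  "Dq q m = Dfuel q (msize m) m"

definition boundRHS :: "real \<Rightarrow> real \<Rightarrow> enat \<Rightarrow> (nat \<Rightarrow> real) \<Rightarrow> mi \<Rightarrow> real" where
  "boundRHS c0 c q \<beta> \<nu> = c0 * c ^ msize \<nu> *
     (\<Sum>m\<in>{m. mle m \<nu>}. mfact m * Dq q m * mpow \<beta> m *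
        (\<Prod>i\<in>supp \<nu>. real (Stirling (\<nu> i) (m i))))"

definition recRHS :: "real \<Rightarrow> enat \<Rightarrow> (nat \<Rightarrow> real) \<Rightarrow> (mi \<Rightarrow> real) \<Rightarrow> mi \<Rightarrow> real" where
  "recRHS c q \<beta> \<Upsilon> \<nu> =
     (\<Sum>m\<in>{m. mle m \<nu> \<and> m \<noteq> (\<lambda>_. 0) \<and> enat (card (supp m)) \<le> q}.
        c ^ msize m * mbinom \<nu> m * \<Upsilon> (msub \<nu> m) * (\<Prod>j\<in>supp m. \<beta> j))"

end

theory Submission
  imports Defs "HOL-Library.FuncSet"
begin


lemma mle_supp: "mle m \<nu> \<Longrightarrow> supp m \<subseteq> supp \<nu>"
  by (auto simp: mle_def supp_def) (meson less_le_trans)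

lemma mle_finsupp: "finsupp \<nu> \<Longrightarrow> mle m \<nu> \<Longrightarrow> finsupp m"
  using mle_supp finite_subset unfolding finsupp_def by blast

lemma msub_supp: "supp (msub \<nu> m) \<subseteq> supp \<nu>"
  by (auto simp: msub_def supp_def)

lemma msub_finsupp: "finsupp \<nu> \<Longrightarrow> finsupp (msub \<nu> m)"
  using msub_supp finite_subset unfolding finsupp_def by blast

definition Zs :: "nat set \<Rightarrow> (nat \<Rightarrow> nat set) \<Rightarrow> mi set" where
  "Zs I A = {m. (\<forall>i\<in>I. m i \<in> A i) \<and> (\<forall>i. i \<notin> I \<longrightarrow> m i = 0)}"

lemma Zs_image: "Zs I A = (\<lambda>g i. if i \<in> I then g i else 0) ` PiE I A"
proof (intro equalityI subsetI)
  fix m assume "m \<in> Zs I A"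
  then have "m = (\<lambda>i. if i \<in> I then restrict m I i else 0)" "restrict m I \<in> PiE I A"
    by (auto simp: Zs_def)
  then show "m \<in> (\<lambda>g i. if i \<in> I then g i else 0) ` PiE I A" by blast
qed (auto simp: Zs_def)

lemma finite_Zs: "finite I \<Longrightarrow> (\<And>i. i \<in> I \<Longrightarrow> finite (A i)) \<Longrightarrow> finite (Zs I A)"
  unfolding Zs_image by (intro finite_imageI finite_PiE) auto

lemma prod_sum_Zs:
  fixes f :: "nat \<Rightarrow> nat \<Rightarrow> 'c :: comm_semiring_1"
  assumes "finite I"
  shows "(\<Prod>i\<in>I. \<Sum>k\<in>A i. f i k) = (\<Sum>m\<in>Zs I A. \<Prod>i\<in>I. f i (m i))"
  using assms
proof (induction I rule: finite_induct)
  case empty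
  have "Zs {} A = {\<lambda>_. 0}" by (auto simp: Zs_def)
  then show ?case by simp
next
  case (insert x I)
  have "(\<Sum>m\<in>Zs (insert x I) A. \<Prod>i\<in>insert x I. f i (m i)) =
        (\<Sum>m\<in>Zs (insert x I) A. f x (m x) * (\<Prod>i\<in>I. f i (m i)))"
    using insert by simp
  also have "\<dots> = (\<Sum>m\<in>Zs (insert x I) A. f x (m x) * (\<Prod>i\<in>I. f i ((m(x:=0)) i)))"
    using insert by (intro sum.cong refl arg_cong2[where f="(*)"] prod.cong) auto
  also have "\<dots> = (\<Sum>(y,g)\<in>A x \<times> Zs I A. f x y * (\<Prod>i\<in>I. f i (g i)))"
    using insert.hyps
    by (intro sum.reindex_bij_witness[of _ "\<lambda>(y,g). g(x := y)" "\<lambda>g. (g x, g(x := 0))"])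
       (auto simp: Zs_def)
  also have "\<dots> = (\<Sum>y\<in>A x. \<Sum>g\<in>Zs I A. f x y * (\<Prod>i\<in>I. f i (g i)))"
    by (rule sum.cartesian_product[symmetric])
  also have "\<dots> = (\<Sum>y\<in>A x. f x y) * (\<Sum>g\<in>Zs I A. \<Prod>i\<in>I. f i (g i))"
    by (rule sum_product[symmetric])
  also have "(\<Sum>g\<in>Zs I A. \<Prod>i\<in>I. f i (g i)) = (\<Prod>i\<in>I. \<Sum>k\<in>A i. f i k)"
    using insert.IH by simp
  finally show ?case using insert by simp
qed

lemma Stirling_sum: "Stirling (Suc n) (Suc j) = (\<Sum>k\<le>n. (n choose k) * Stirling k j)"
proof (induction n arbitrary: j)
  case 0
  then show ?case by (cases j) auto
next
  case (Suc n)
  have "(\<Sum>k\<le>Suc n. (Suc n choose k) * Stirling k j) =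
        (\<Sum>k\<le>n. (n choose k) * Stirling k j) + (\<Sum>k\<le>n. (n choose k) * Stirling (Suc k) j)"
  proof -
    have e1: "(\<Sum>k\<le>Suc n. (Suc n choose k) * Stirling k j) =
          Stirling 0 j + (\<Sum>k\<le>n. (Suc n choose Suc k) * Stirling (Suc k) j)"
      by (subst sum.atMost_Suc_shift) simp
    have e2: "(\<Sum>k\<le>n. (Suc n choose Suc k) * Stirling (Suc k) j) = (\<Sum>k\<le>n. (n choose k) * Stirling (Suc k) j)
                    + (\<Sum>k\<le>n. (n choose Suc k) * Stirling (Suc k) j)"
      by (simp add: sum.distrib algebra_simps)
    have e3: "(\<Sum>k\<le>n. (n choose Suc k) * Stirling (Suc k) j) + Stirling 0 j =
               (\<Sum>k\<le>Suc n. (n choose k) * Stirling k j)"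
      by (simp only: sum.atMost_Suc_shift[of _ n]) simp
    have e4: "(\<Sum>k\<le>Suc n. (n choose k) * Stirling k j) = (\<Sum>k\<le>n. (n choose k) * Stirling k j)"
      by (simp add: sum.atMost_Suc)
    show ?thesis using e1 e2 e3 e4 by linarith
  qed
  also have "(\<Sum>k\<le>n. (n choose k) * Stirling k j) = Stirling (Suc n) (Suc j)"
    using Suc by simp
  also have "(\<Sum>k\<le>n. (n choose k) * Stirling (Suc k) j) = Suc j * Stirling (Suc n) (Suc j) - Stirling (Suc n) (Suc j) + Stirling (Suc n) j"
  proof (cases j)
    case 0
    then show ?thesis by simp
  next
    case (Suc j')
    have "(\<Sum>k\<le>n. (n choose k) * Stirling (Suc k) j) =
          Suc j' * (\<Sum>k\<le>n. (n choose k) * Stirling k j) + (\<Sum>k\<le>n. (n choose k) * Stirling k j')"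
      using Suc by (simp add: sum.distrib sum_distrib_left algebra_simps)
    also have "\<dots> = Suc j' * Stirling (Suc n) (Suc j) + Stirling (Suc n) j"
      using Suc.IH[of j] Suc.IH[of j'] Suc by simp
    finally show ?thesis using Suc by simp
  qed
  finally show ?case by simp
qed

lemma Stirling_key:
  "Suc j * Stirling n (Suc j) = (\<Sum>k\<in>{1..n}. (n choose k) * Stirling (n - k) j)"
proof -
  have "(\<Sum>k\<in>{1..n}. (n choose k) * Stirling (n - k) j) = (\<Sum>k<n. (n choose k) * Stirling k j)"
    by (intro sum.reindex_bij_witness[of _ "\<lambda>k. n - k" "\<lambda>k. n - k"])
       (auto simp: binomial_symmetric[symmetric])
  moreover have "Stirling (Suc n) (Suc j) = (\<Sum>k<n. (n choose k) * Stirling k j) + Stirling n j"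
    by (subst Stirling_sum) (simp add: lessThan_Suc_atMost[symmetric])
  moreover have "Stirling (Suc n) (Suc j) = Suc j * Stirling n (Suc j) + Stirling n j" by simp
  ultimately show ?thesis by linarith
qed



lemma msize_on: "finite I \<Longrightarrow> supp m \<subseteq> I \<Longrightarrow> msize m = (\<Sum>j\<in>I. m j)"
  unfolding msize_def by (rule sum.mono_neutral_left) (auto simp: supp_def)

lemma prod_supp_on: "finite I \<Longrightarrow> supp m \<subseteq> I \<Longrightarrow> (\<And>j. j \<in> I \<Longrightarrow> m j = 0 \<Longrightarrow> g j = 1)
   \<Longrightarrow> (\<Prod>j\<in>supp m. g j) = (\<Prod>j\<in>I. g j)"
  by (rule prod.mono_neutral_left) (auto simp: supp_def)

lemma msize_split: "finsupp \<nu> \<Longrightarrow> mle m \<nu> \<Longrightarrow> msize \<nu> = msize m + msize (msub \<nu> m)"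
proof -
  assume f: "finsupp \<nu>" and le: "mle m \<nu>"
  let ?I = "supp \<nu>"
  have fi: "finite ?I" using f by (simp add: finsupp_def)
  have "msize \<nu> = (\<Sum>j\<in>?I. m j + msub \<nu> m j)"
    using le by (auto simp: msize_def msub_def mle_def intro!: sum.cong)
  also have "\<dots> = msize m + msize (msub \<nu> m)"
    using fi mle_supp[OF le] msub_supp[of \<nu> m] by (simp add: sum.distrib msize_on)
  finally show ?thesis .
qed

lemma msize_pos: "finsupp m \<Longrightarrow> m \<noteq> (\<lambda>_. 0) \<Longrightarrow> msize m > 0"
proof -
  assume f: "finsupp m" and ne: "m \<noteq> (\<lambda>_. 0)"
  then obtain j where j: "m j \<noteq> 0" by auto
  have "m j \<le> msize m" unfolding msize_def
    using f j by (intro member_le_sum) (auto simp: finsupp_def supp_def)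
  then show ?thesis using j by simp
qed

lemma msize_zero: "msize (\<lambda>_. 0) = 0" by (simp add: msize_def supp_def)

lemma msize_less: "finsupp \<nu> \<Longrightarrow> mle m \<nu> \<Longrightarrow> m \<noteq> (\<lambda>_. 0) \<Longrightarrow> msize (msub \<nu> m) < msize \<nu>"
  using msize_split msize_pos mle_finsupp by fastforce

lemma eset_mle: "u \<subseteq> supp m \<Longrightarrow> mle (eset u) m"
  by (auto simp: mle_def eset_def supp_def)

lemma eset_ne: "u \<noteq> {} \<Longrightarrow> eset u \<noteq> (\<lambda>_. 0)"
  by (auto simp: eset_def fun_eq_iff)

lemma Dfuel_zero: "Dfuel q n (\<lambda>_. 0) = 1"
  by (cases n) (simp_all only: Dfuel.simps if_P[OF refl])

lemma Dfuel_eq: "finsupp m \<Longrightarrow> msize m \<le> n \<Longrightarrow> Dfuel q n m = Dq q m"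
proof (induction n arbitrary: m rule: less_induct)
  case (less n)
  show ?case
  proof (cases "m = (\<lambda>_. 0)")
    case True
    then show ?thesis by (simp only: Dq_def Dfuel_zero)
  next
    case False
    define U where "U = {u. u \<subseteq> supp m \<and> u \<noteq> {} \<and> enat (card u) \<le> q}"
    have pos: "msize m > 0" using msize_pos less.prems False by blast
    then obtain n' where n: "n = Suc n'" using less.prems by (cases n) auto
    obtain k where k: "msize m = Suc k" using pos by (cases "msize m") auto
    have sub: "finsupp (msub m (eset u)) \<and> msize (msub m (eset u)) < msize m" if "u \<in> U" for u
    proof
      show "finsupp (msub m (eset u))" using less.prems(1) by (rule msub_finsupp)
      show "msize (msub m (eset u)) < msize m"
        using that less.prems(1) unfolding U_def by (intro msize_less eset_mle eset_ne) auto
    qed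
    have "Dfuel q n m = (\<Sum>u\<in>U. Dfuel q n' (msub m (eset u)))"
      using n False by (simp add: U_def)
    also have "\<dots> = (\<Sum>u\<in>U. Dq q (msub m (eset u)))"
    proof (intro sum.cong refl)
      fix u assume "u \<in> U"
      from sub[OF this] show "Dfuel q n' (msub m (eset u)) = Dq q (msub m (eset u))"
        using less.prems n by (intro less.IH) auto
    qed
    also have "\<dots> = (\<Sum>u\<in>U. Dfuel q k (msub m (eset u)))"
    proof (intro sum.cong refl)
      fix u assume "u \<in> U"
      from sub[OF this] show "Dq q (msub m (eset u)) = Dfuel q k (msub m (eset u))"
        using less.prems n k by (intro less.IH[symmetric]) auto
    qed
    also have "\<dots> = Dq q m" using k False by (simp add: Dq_def U_def)
    finally show ?thesis .
  qed
qed

lemma Dq_zero: "Dq q (\<lambda>_. 0) = 1" by (simp only: Dq_def Dfuel_zero)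

lemma Dq_rec: "finsupp m \<Longrightarrow> m \<noteq> (\<lambda>_. 0) \<Longrightarrow>
  Dq q m = (\<Sum>u\<in>{u. u \<subseteq> supp m \<and> u \<noteq> {} \<and> enat (card u) \<le> q}. Dq q (msub m (eset u)))"
proof -
  assume f: "finsupp m" and ne: "m \<noteq> (\<lambda>_. 0)"
  obtain k where k: "msize m = Suc k" using msize_pos[OF f ne] by (cases "msize m") auto
  have "Dq q m = (\<Sum>u\<in>{u. u \<subseteq> supp m \<and> u \<noteq> {} \<and> enat (card u) \<le> q}. Dfuel q k (msub m (eset u)))"
    using k ne by (simp add: Dq_def)
  also have "\<dots> = (\<Sum>u\<in>{u. u \<subseteq> supp m \<and> u \<noteq> {} \<and> enat (card u) \<le> q}. Dq q (msub m (eset u)))"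
    using f k by (intro sum.cong refl Dfuel_eq)
       (auto intro!: msub_finsupp dest!: msize_less[OF f eset_mle eset_ne])
  finally show ?thesis .
qed

lemma finite_mle: "finsupp \<nu> \<Longrightarrow> finite {m. mle m \<nu>}"
proof -
  assume f: "finsupp \<nu>"
  have "{m. mle m \<nu>} = Zs (supp \<nu>) (\<lambda>i. {0..\<nu> i})"
  proof (rule set_eqI)
    fix x
    have "(\<forall>j. x j \<le> \<nu> j) \<longleftrightarrow> (\<forall>i\<in>supp \<nu>. x i \<in> {0..\<nu> i}) \<and> (\<forall>i. i \<notin> supp \<nu> \<longrightarrow> x i = 0)"
    proof
      assume "\<forall>j. x j \<le> \<nu> j" then show "(\<forall>i\<in>supp \<nu>. x i \<in> {0..\<nu> i}) \<and> (\<forall>i. i \<notin> supp \<nu> \<longrightarrow> x i = 0)"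
        by (auto simp: supp_def) (metis le_zero_eq)
    next
      assume a: "(\<forall>i\<in>supp \<nu>. x i \<in> {0..\<nu> i}) \<and> (\<forall>i. i \<notin> supp \<nu> \<longrightarrow> x i = 0)"
      show "\<forall>j. x j \<le> \<nu> j"
      proof
        fix j show "x j \<le> \<nu> j" using a by (cases "j \<in> supp \<nu>") auto
      qed
    qed
    then show "x \<in> {m. mle m \<nu>} \<longleftrightarrow> x \<in> Zs (supp \<nu>) (\<lambda>i. {0..\<nu> i})"
      by (simp add: Zs_def mle_def)
  qed
  then show ?thesis using f by (auto intro!: finite_Zs simp: finsupp_def)
qed



definition Bs :: "enat \<Rightarrow> (nat \<Rightarrow> real) \<Rightarrow> mi \<Rightarrow> real" where
  "Bs q \<beta> \<nu> = (\<Sum>m\<in>{m. mle m \<nu>}. mfact m * Dq q m * mpow \<beta> m *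
        (\<Prod>i\<in>supp \<nu>. real (Stirling (\<nu> i) (m i))))"

definition madd :: "mi \<Rightarrow> mi \<Rightarrow> mi" where
  "madd m w = (\<lambda>j. m j + w j)"

lemma Bs_on:
  assumes f: "finsupp \<nu>" and le: "mle w \<nu>"
  shows "Bs q \<beta> w = (\<Sum>m\<in>{m. mle m \<nu>}. mfact m * Dq q m * mpow \<beta> m *
        (\<Prod>i\<in>supp \<nu>. real (Stirling (w i) (m i))))"
proof -
  have fi: "finite (supp \<nu>)" using f by (simp add: finsupp_def)
  have "Bs q \<beta> w = (\<Sum>m\<in>{m. mle m w}. mfact m * Dq q m * mpow \<beta> m *
        (\<Prod>i\<in>supp \<nu>. real (Stirling (w i) (m i))))"
    unfolding Bs_def
  proof (intro sum.cong refl arg_cong2[where f="(*)"])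
    fix m assume "m \<in> {m. mle m w}"
    then have "m i = 0" if "w i = 0" for i using that by (auto simp: mle_def) (metis le_zero_eq)
    then show "(\<Prod>i\<in>supp w. real (Stirling (w i) (m i))) = (\<Prod>i\<in>supp \<nu>. real (Stirling (w i) (m i)))"
      using fi mle_supp[OF le] by (intro prod_supp_on) auto
  qed
  also have "\<dots> = (\<Sum>m\<in>{m. mle m \<nu>}. mfact m * Dq q m * mpow \<beta> m *
        (\<Prod>i\<in>supp \<nu>. real (Stirling (w i) (m i))))"
  proof (rule sum.mono_neutral_left)
    show "finite {m. mle m \<nu>}" using f by (rule finite_mle)
    show "{m. mle m w} \<subseteq> {m. mle m \<nu>}" using le by (auto simp: mle_def intro: le_trans)
    show "\<forall>m\<in>{m. mle m \<nu>} - {m. mle m w}. mfact m * Dq q m * mpow \<beta> m *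
        (\<Prod>i\<in>supp \<nu>. real (Stirling (w i) (m i))) = 0"
    proof
      fix m assume m: "m \<in> {m. mle m \<nu>} - {m. mle m w}"
      then obtain i where i: "w i < m i" by (auto simp: mle_def not_le)
      have "m i \<le> \<nu> i" using m by (simp add: mle_def)
      then have "i \<in> supp \<nu>" using i unfolding supp_def by simp
      have z: "real (Stirling (w i) (m i)) = 0" using i by simp
      have "(\<Prod>j\<in>supp \<nu>. real (Stirling (w j) (m j))) =
          real (Stirling (w i) (m i)) * (\<Prod>j\<in>supp \<nu> - {i}. real (Stirling (w j) (m j)))"
        using fi \<open>i \<in> supp \<nu>\<close> by (rule prod.remove)
      then have "(\<Prod>i\<in>supp \<nu>. real (Stirling (w i) (m i))) = 0" using z by simp
      then show "mfact m * Dq q m * mpow \<beta> m * (\<Prod>i\<in>supp \<nu>. real (Stirling (w i) (m i))) = 0" by simp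
    qed
  qed
  finally show ?thesis .
qed

lemma madd_supp: "u \<subseteq> supp \<nu> \<Longrightarrow> mle m' \<nu> \<Longrightarrow> supp (madd m' (eset u)) \<subseteq> supp \<nu>"
  using mle_supp[of m' \<nu>] by (auto simp: madd_def eset_def supp_def)

lemma mpow_madd:
  assumes f: "finsupp \<nu>" and u: "u \<subseteq> supp \<nu>" and le: "mle m' \<nu>"
  shows "mpow \<beta> (madd m' (eset u)) = mpow \<beta> m' * (\<Prod>j\<in>u. \<beta> j)"
proof -
  let ?I = "supp \<nu>"
  have fi: "finite ?I" using f by (simp add: finsupp_def)
  have "mpow \<beta> (madd m' (eset u)) = (\<Prod>j\<in>?I. \<beta> j ^ (madd m' (eset u) j))"
    unfolding mpow_def using fi madd_supp[OF u le] by (intro prod_supp_on) auto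
  also have "\<dots> = (\<Prod>j\<in>?I. \<beta> j ^ m' j) * (\<Prod>j\<in>?I. \<beta> j ^ eset u j)"
    by (simp add: madd_def power_add prod.distrib)
  also have "(\<Prod>j\<in>?I. \<beta> j ^ m' j) = mpow \<beta> m'"
    unfolding mpow_def using fi mle_supp[OF le] by (intro prod_supp_on[symmetric]) auto
  also have "(\<Prod>j\<in>?I. \<beta> j ^ eset u j) = (\<Prod>j\<in>u. \<beta> j)"
    using fi u by (intro prod.mono_neutral_cong_right) (auto simp: eset_def)
  finally show ?thesis .
qed

lemma Zs_N:
  assumes u: "u \<subseteq> supp \<nu>"
  shows "{m. mle m \<nu> \<and> supp m = u} = Zs (supp \<nu>) (\<lambda>i. if i \<in> u then {1..\<nu> i} else {0})"
proof (rule set_eqI)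
  fix m
  show "m \<in> {m. mle m \<nu> \<and> supp m = u} \<longleftrightarrow> m \<in> Zs (supp \<nu>) (\<lambda>i. if i \<in> u then {1..\<nu> i} else {0})"
  proof
    assume a: "m \<in> {m. mle m \<nu> \<and> supp m = u}"
    then show "m \<in> Zs (supp \<nu>) (\<lambda>i. if i \<in> u then {1..\<nu> i} else {0})"
      using mle_supp[of m \<nu>] by (auto simp: Zs_def mle_def supp_def)
  next
    assume a: "m \<in> Zs (supp \<nu>) (\<lambda>i. if i \<in> u then {1..\<nu> i} else {0})"
    have a1: "\<forall>i\<in>supp \<nu>. m i \<in> (if i \<in> u then {1..\<nu> i} else {0})" "\<forall>i. i \<notin> supp \<nu> \<longrightarrow> m i = 0"
      using a by (simp_all add: Zs_def)
    have "m j \<le> \<nu> j" for j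
    proof (cases "j \<in> supp \<nu>")
      case True
      then show ?thesis using a1(1)[rule_format, OF True] by (auto split: if_splits)
    next
      case False
      then show ?thesis using a1(2) by simp
    qed
    moreover have "supp m = u"
    proof (rule set_eqI)
      fix j show "j \<in> supp m \<longleftrightarrow> j \<in> u"
      proof (cases "j \<in> supp \<nu>")
        case True
        then show ?thesis using a1(1)[rule_format, OF True] by (auto simp: supp_def split: if_splits)
      next
        case False
        then show ?thesis using a1(2) u by (auto simp: supp_def)
      qed
    qed
    ultimately show "m \<in> {m. mle m \<nu> \<and> supp m = u}" by (simp add: mle_def)
  qed
qed

lemma fact_Stirling:
  "fact (Suc j) * real (Stirling n (Suc j)) = fact j * (\<Sum>k\<in>{1..n}. real (n choose k) * real (Stirling (n - k) j))"
proof -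
  have "real (Suc j * Stirling n (Suc j)) = (\<Sum>k\<in>{1..n}. real (n choose k) * real (Stirling (n - k) j))"
    by (subst Stirling_key) simp
  then have h: "real (Suc j) * real (Stirling n (Suc j)) = (\<Sum>k\<in>{1..n}. real (n choose k) * real (Stirling (n - k) j))"
    by (simp only: of_nat_mult)
  have "fact (Suc j) * real (Stirling n (Suc j)) = fact j * (real (Suc j) * real (Stirling n (Suc j)))"
    by (simp only: fact_Suc mult_ac)
  also have "\<dots> = fact j * (\<Sum>k\<in>{1..n}. real (n choose k) * real (Stirling (n - k) j))" using h by simp
  finally show ?thesis .
qed

lemma factD:
  assumes f: "finsupp \<nu>" and u: "u \<subseteq> supp \<nu>" and le: "mle m' \<nu>"
  shows "mfact (madd m' (eset u)) * (\<Prod>i\<in>supp \<nu>. real (Stirling (\<nu> i) (madd m' (eset u) i))) =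
     mfact m' * (\<Sum>m\<in>{m. mle m \<nu> \<and> supp m = u}. mbinom \<nu> m *
        (\<Prod>i\<in>supp \<nu>. real (Stirling (msub \<nu> m i) (m' i))))"
proof -
  let ?I = "supp \<nu>"
  let ?A = "\<lambda>i. if i \<in> u then {1..\<nu> i} else {0::nat}"
  let ?h = "\<lambda>i k. real (\<nu> i choose k) * real (Stirling (\<nu> i - k) (m' i))"
  have fi: "finite ?I" using f by (simp add: finsupp_def)
  have "mfact (madd m' (eset u)) = (\<Prod>i\<in>?I. fact (madd m' (eset u) i))"
    unfolding mfact_def using fi madd_supp[OF u le] by (intro prod_supp_on) auto
  then have L: "mfact (madd m' (eset u)) * (\<Prod>i\<in>supp \<nu>. real (Stirling (\<nu> i) (madd m' (eset u) i))) =
      (\<Prod>i\<in>?I. fact (m' i + eset u i) * real (Stirling (\<nu> i) (m' i + eset u i)))"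
    by (simp add: prod.distrib madd_def)
  have mf: "mfact m' = (\<Prod>i\<in>?I. fact (m' i))"
    unfolding mfact_def using fi mle_supp[OF le] by (intro prod_supp_on) auto
  have "(\<Sum>m\<in>{m. mle m \<nu> \<and> supp m = u}. mbinom \<nu> m *
        (\<Prod>i\<in>supp \<nu>. real (Stirling (msub \<nu> m i) (m' i)))) =
        (\<Sum>m\<in>Zs ?I ?A. \<Prod>i\<in>?I. ?h i (m i))"
    unfolding Zs_N[OF u] by (simp add: mbinom_def msub_def prod.distrib)
  also have "\<dots> = (\<Prod>i\<in>?I. \<Sum>k\<in>?A i. ?h i k)"
    using fi by (rule prod_sum_Zs[symmetric])
  finally have R: "mfact m' * (\<Sum>m\<in>{m. mle m \<nu> \<and> supp m = u}. mbinom \<nu> m *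
        (\<Prod>i\<in>supp \<nu>. real (Stirling (msub \<nu> m i) (m' i)))) =
       (\<Prod>i\<in>?I. fact (m' i) * (\<Sum>k\<in>?A i. ?h i k))"
    using mf by (simp add: prod.distrib)
  have "(\<Prod>i\<in>?I. fact (m' i + eset u i) * real (Stirling (\<nu> i) (m' i + eset u i))) =
        (\<Prod>i\<in>?I. fact (m' i) * (\<Sum>k\<in>?A i. ?h i k))"
  proof (rule prod.cong[OF refl])
    fix i assume "i \<in> ?I"
    show "fact (m' i + eset u i) * real (Stirling (\<nu> i) (m' i + eset u i)) =
          fact (m' i) * (\<Sum>k\<in>?A i. ?h i k)"
    proof (cases "i \<in> u")
      case True
      then show ?thesis using fact_Stirling[of "m' i" "\<nu> i"] by (simp add: eset_def)
    next
      case False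
      then show ?thesis by (simp add: eset_def)
    qed
  qed
  then show ?thesis using L R by simp
qed



lemma madd_msub: "u \<subseteq> supp m \<Longrightarrow> madd (msub m (eset u)) (eset u) = m"
  by (auto simp: madd_def msub_def eset_def supp_def fun_eq_iff)

lemma msub_madd: "msub (madd m' (eset u)) (eset u) = m'"
  by (auto simp: madd_def msub_def eset_def fun_eq_iff)

lemma madd_ne: "u \<noteq> {} \<Longrightarrow> madd m' (eset u) \<noteq> (\<lambda>_. 0)"
  by (auto simp: madd_def eset_def fun_eq_iff)

lemma supp_madd: "u \<subseteq> supp (madd m' (eset u))"
  by (auto simp: madd_def eset_def supp_def)

lemma mle_madd: "mle (madd m' (eset u)) \<nu> \<Longrightarrow> mle m' \<nu>"
  by (auto simp: mle_def madd_def intro: le_trans[rotated])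

lemma prod_zero_at: "finite A \<Longrightarrow> i \<in> A \<Longrightarrow> f i = (0::real) \<Longrightarrow> (\<Prod>j\<in>A. f j) = 0"
  by (simp add: prod.remove)

lemma key:
  assumes f: "finsupp \<nu>" and ne: "\<nu> \<noteq> (\<lambda>_. 0)"
  shows "Bs q \<beta> \<nu> = (\<Sum>m\<in>{m. mle m \<nu> \<and> m \<noteq> (\<lambda>_. 0) \<and> enat (card (supp m)) \<le> q}.
            mbinom \<nu> m * Bs q \<beta> (msub \<nu> m) * (\<Prod>j\<in>supp m. \<beta> j))"
proof -
  define I where "I = supp \<nu>"
  define M where "M = {m. mle m \<nu>}"
  define U where "U = {u. u \<subseteq> I \<and> u \<noteq> {} \<and> enat (card u) \<le> q}"
  define Um where "Um = (\<lambda>m. {u. u \<subseteq> supp m \<and> u \<noteq> {} \<and> enat (card u) \<le> q})"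
  define P where "P = (\<lambda>w m. \<Prod>i\<in>I. real (Stirling (w i) (m i)))"
  define F' where "F' = (\<lambda>u m'. mfact (madd m' (eset u)) * mpow \<beta> (madd m' (eset u)) *
                               P \<nu> (madd m' (eset u)) * Dq q m')"
  define N where "N = (\<lambda>u. {m. mle m \<nu> \<and> supp m = u})"
  define R where "R = {m. mle m \<nu> \<and> m \<noteq> (\<lambda>_. 0) \<and> enat (card (supp m)) \<le> q}"
  have fi: "finite I" using f by (simp add: finsupp_def I_def)
  have fM: "finite M" using f by (simp add: M_def finite_mle)
  have fU: "finite U" using fi by (rule finite_subset[rotated, OF finite_Pow_iff[THEN iffD2]]) (auto simp: U_def)
  have fUm: "finite (Um m)" if "m \<in> M - {\<lambda>_. 0}" for m
  proof -
    have "finite (supp m)" using that f mle_finsupp by (auto simp: M_def finsupp_def)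
    then show ?thesis by (rule finite_subset[rotated, OF finite_Pow_iff[THEN iffD2]]) (auto simp: Um_def)
  qed
  have "Bs q \<beta> \<nu> = (\<Sum>m\<in>M. mfact m * Dq q m * mpow \<beta> m * P \<nu> m)"
    by (simp add: Bs_def M_def P_def I_def)
  also have "\<dots> = (\<Sum>m\<in>M - {\<lambda>_. 0}. mfact m * Dq q m * mpow \<beta> m * P \<nu> m)"
  proof -
    have z: "(\<lambda>_. 0) \<in> M" by (simp add: M_def mle_def)
    obtain i where i: "\<nu> i \<noteq> 0" using ne by auto
    then have "i \<in> I" by (simp add: I_def supp_def)
    moreover have "real (Stirling (\<nu> i) 0) = 0" using i by (cases "\<nu> i") auto
    ultimately have "P \<nu> (\<lambda>_. 0) = 0" unfolding P_def using fi by (intro prod_zero_at) auto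
    then show ?thesis by (subst sum.remove[OF fM z]) simp
  qed
  also have "\<dots> = (\<Sum>m\<in>M - {\<lambda>_. 0}. \<Sum>u\<in>Um m. mfact m * mpow \<beta> m * P \<nu> m * Dq q (msub m (eset u)))"
  proof (rule sum.cong[OF refl])
    fix m assume m: "m \<in> M - {\<lambda>_. 0}"
    then have "finsupp m" using f mle_finsupp by (auto simp: M_def)
    then have "Dq q m = (\<Sum>u\<in>Um m. Dq q (msub m (eset u)))" using m by (simp add: Dq_rec Um_def)
    then show "mfact m * Dq q m * mpow \<beta> m * P \<nu> m =
       (\<Sum>u\<in>Um m. mfact m * mpow \<beta> m * P \<nu> m * Dq q (msub m (eset u)))"
      by (simp add: sum_distrib_left mult_ac)
  qed
  also have "\<dots> = (\<Sum>(m,u)\<in>Sigma (M - {\<lambda>_. 0}) Um. mfact m * mpow \<beta> m * P \<nu> m * Dq q (msub m (eset u)))"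
    using fM fUm by (intro sum.Sigma) auto
  also have "\<dots> = (\<Sum>(u,m')\<in>Sigma U (\<lambda>u. {m'. mle (madd m' (eset u)) \<nu>}). F' u m')"
  proof (rule sum.reindex_bij_witness[of _ "\<lambda>(u,m'). (madd m' (eset u), u)" "\<lambda>(m,u). (u, msub m (eset u))"])
    fix a assume a: "a \<in> Sigma (M - {\<lambda>_. 0}) Um"
    obtain m u where mu: "a = (m,u)" by fastforce
    have u: "u \<subseteq> supp m" "u \<noteq> {}" "enat (card u) \<le> q" and m: "mle m \<nu>"
      using a mu by (auto simp: Um_def M_def)
    show "(case case a of (m, u) \<Rightarrow> (u, msub m (eset u)) of (u, m') \<Rightarrow> (madd m' (eset u), u)) = a"
      using mu u by (simp add: madd_msub)
    show "(case a of (m, u) \<Rightarrow> (u, msub m (eset u))) \<in> Sigma U (\<lambda>u. {m'. mle (madd m' (eset u)) \<nu>})"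
      using mu u m mle_supp[OF m] by (auto simp: U_def I_def madd_msub)
    show "(case case a of (m, u) \<Rightarrow> (u, msub m (eset u)) of (u, m') \<Rightarrow> F' u m') =
          (case a of (m, u) \<Rightarrow> mfact m * mpow \<beta> m * P \<nu> m * Dq q (msub m (eset u)))"
      using mu u by (simp add: F'_def madd_msub)
  next
    fix b assume b: "b \<in> Sigma U (\<lambda>u. {m'. mle (madd m' (eset u)) \<nu>})"
    obtain u m' where um: "b = (u,m')" by fastforce
    have u: "u \<subseteq> I" "u \<noteq> {}" "enat (card u) \<le> q" and m: "mle (madd m' (eset u)) \<nu>"
      using b um by (auto simp: U_def)
    show "(case case b of (u, m') \<Rightarrow> (madd m' (eset u), u) of (m, u) \<Rightarrow> (u, msub m (eset u))) = b"
      using um by (simp add: msub_madd)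
    show "(case b of (u, m') \<Rightarrow> (madd m' (eset u), u)) \<in> Sigma (M - {\<lambda>_. 0}) Um"
      using um u m madd_ne[OF u(2)] supp_madd[of u m'] by (auto simp: M_def Um_def)
  qed
  also have "\<dots> = (\<Sum>u\<in>U. \<Sum>m'\<in>{m'. mle (madd m' (eset u)) \<nu>}. F' u m')"
  proof (rule sum.Sigma[symmetric])
    show "finite U" by (rule fU)
    show "\<forall>u\<in>U. finite {m'. mle (madd m' (eset u)) \<nu>}"
      using fM by (auto simp: M_def intro: finite_subset[rotated] mle_madd)
  qed
  also have "\<dots> = (\<Sum>u\<in>U. \<Sum>m'\<in>M. F' u m')"
  proof (rule sum.cong[OF refl], rule sum.mono_neutral_left[OF fM])
    fix u assume u: "u \<in> U"
    show "{m'. mle (madd m' (eset u)) \<nu>} \<subseteq> M" by (auto simp: M_def intro: mle_madd)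
    show "\<forall>m'\<in>M - {m'. mle (madd m' (eset u)) \<nu>}. F' u m' = 0"
    proof
      fix m' assume m': "m' \<in> M - {m'. mle (madd m' (eset u)) \<nu>}"
      then obtain i where i: "\<not> madd m' (eset u) i \<le> \<nu> i" by (auto simp: mle_def)
      have le: "m' i \<le> \<nu> i" using m' by (auto simp: M_def mle_def)
      have iu: "i \<in> u" using i le by (auto simp: madd_def eset_def split: if_splits)
      then have "i \<in> I" using u by (auto simp: U_def)
      moreover have "real (Stirling (\<nu> i) (madd m' (eset u) i)) = 0" using i by simp
      ultimately have "P \<nu> (madd m' (eset u)) = 0" unfolding P_def using fi by (intro prod_zero_at)
      then show "F' u m' = 0" by (simp add: F'_def)
    qed
  qed
  finally have LHS: "Bs q \<beta> \<nu> = (\<Sum>u\<in>U. \<Sum>m'\<in>M. F' u m')" .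
  have "(\<Sum>m\<in>R. mbinom \<nu> m * Bs q \<beta> (msub \<nu> m) * (\<Prod>j\<in>supp m. \<beta> j)) =
        (\<Sum>m\<in>R. mbinom \<nu> m * (\<Sum>m'\<in>M. mfact m' * Dq q m' * mpow \<beta> m' * P (msub \<nu> m) m') * (\<Prod>j\<in>supp m. \<beta> j))"
  proof (rule sum.cong[OF refl])
    fix m assume "m \<in> R"
    then have "mle (msub \<nu> m) \<nu>" by (auto simp: R_def mle_def msub_def)
    then show "mbinom \<nu> m * Bs q \<beta> (msub \<nu> m) * (\<Prod>j\<in>supp m. \<beta> j) =
        mbinom \<nu> m * (\<Sum>m'\<in>M. mfact m' * Dq q m' * mpow \<beta> m' * P (msub \<nu> m) m') * (\<Prod>j\<in>supp m. \<beta> j)"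
      by (simp add: Bs_on[OF f] M_def P_def I_def)
  qed
  also have "\<dots> = (\<Sum>(u,m)\<in>Sigma U N. mbinom \<nu> m * (\<Sum>m'\<in>M. mfact m' * Dq q m' * mpow \<beta> m' * P (msub \<nu> m) m') * (\<Prod>j\<in>u. \<beta> j))"
  proof (rule sum.reindex_bij_witness[of _ "snd" "\<lambda>m. (supp m, m)"])
    fix a assume a: "a \<in> R"
    show "snd (supp a, a) = a" by simp
    have "supp a \<noteq> {}" using a by (auto simp: R_def supp_def fun_eq_iff)
    then show "(supp a, a) \<in> Sigma U N" using a mle_supp[of a \<nu>] by (auto simp: R_def U_def N_def I_def)
    show "(case (supp a, a) of (u, m) \<Rightarrow> mbinom \<nu> m * (\<Sum>m'\<in>M. mfact m' * Dq q m' * mpow \<beta> m' * P (msub \<nu> m) m') * prod \<beta> u) =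
         mbinom \<nu> a * (\<Sum>m'\<in>M. mfact m' * Dq q m' * mpow \<beta> m' * P (msub \<nu> a) m') * prod \<beta> (supp a)" by simp
  next
    fix b assume b: "b \<in> Sigma U N"
    then show "(supp (snd b), snd b) = b" by (auto simp: N_def)
    have "snd b \<noteq> (\<lambda>_. 0)" using b by (auto simp: N_def U_def supp_def)
    then show "snd b \<in> R" using b by (auto simp: N_def U_def R_def)
  qed
  also have "\<dots> = (\<Sum>u\<in>U. \<Sum>m\<in>N u. mbinom \<nu> m * (\<Sum>m'\<in>M. mfact m' * Dq q m' * mpow \<beta> m' * P (msub \<nu> m) m') * (\<Prod>j\<in>u. \<beta> j))"
  proof (rule sum.Sigma[symmetric])
    show "finite U" by (rule fU)
    show "\<forall>u\<in>U. finite (N u)" using fM by (auto simp: M_def N_def intro: finite_subset[rotated])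
  qed
  also have "\<dots> = (\<Sum>u\<in>U. \<Sum>m'\<in>M. F' u m')"
  proof (rule sum.cong[OF refl])
    fix u assume u: "u \<in> U"
    then have uI: "u \<subseteq> supp \<nu>" by (simp add: U_def I_def)
    have "(\<Sum>m\<in>N u. mbinom \<nu> m * (\<Sum>m'\<in>M. mfact m' * Dq q m' * mpow \<beta> m' * P (msub \<nu> m) m') * (\<Prod>j\<in>u. \<beta> j)) =
          (\<Sum>m\<in>N u. \<Sum>m'\<in>M. (mfact m' * Dq q m' * mpow \<beta> m' * (\<Prod>j\<in>u. \<beta> j)) * (mbinom \<nu> m * P (msub \<nu> m) m'))"
      by (simp add: sum_distrib_left sum_distrib_right mult_ac)
    also have "\<dots> = (\<Sum>m'\<in>M. \<Sum>m\<in>N u. (mfact m' * Dq q m' * mpow \<beta> m' * (\<Prod>j\<in>u. \<beta> j)) * (mbinom \<nu> m * P (msub \<nu> m) m'))"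
      by (rule sum.swap)
    also have "\<dots> = (\<Sum>m'\<in>M. (mfact m' * Dq q m' * mpow \<beta> m' * (\<Prod>j\<in>u. \<beta> j)) * (\<Sum>m\<in>N u. mbinom \<nu> m * P (msub \<nu> m) m'))"
      by (simp add: sum_distrib_left)
    also have "\<dots> = (\<Sum>m'\<in>M. F' u m')"
    proof (rule sum.cong[OF refl])
      fix m' assume "m' \<in> M"
      then have m': "mle m' \<nu>" by (simp add: M_def)
      have D: "mfact (madd m' (eset u)) * P \<nu> (madd m' (eset u)) = mfact m' * (\<Sum>m\<in>N u. mbinom \<nu> m * P (msub \<nu> m) m')"
        using factD[OF f uI m'] by (simp add: P_def N_def I_def)
      show "(mfact m' * Dq q m' * mpow \<beta> m' * (\<Prod>j\<in>u. \<beta> j)) * (\<Sum>m\<in>N u. mbinom \<nu> m * P (msub \<nu> m) m') = F' u m'"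
        unfolding F'_def mpow_madd[OF f uI m']
        using D by (simp add: mult_ac)
    qed
    finally show "(\<Sum>m\<in>N u. mbinom \<nu> m * (\<Sum>m'\<in>M. mfact m' * Dq q m' * mpow \<beta> m' * P (msub \<nu> m) m') * (\<Prod>j\<in>u. \<beta> j)) =
          (\<Sum>m'\<in>M. F' u m')" .
  qed
  finally have RHS: "(\<Sum>m\<in>R. mbinom \<nu> m * Bs q \<beta> (msub \<nu> m) * (\<Prod>j\<in>supp m. \<beta> j)) = (\<Sum>u\<in>U. \<Sum>m'\<in>M. F' u m')" .
  show ?thesis using LHS RHS by (simp add: R_def)
qed



lemma Bs_zero: "Bs q \<beta> (\<lambda>_. 0) = 1"
proof -
  have "{m. mle m (\<lambda>_. 0)} = {\<lambda>_. 0}" by (auto simp: mle_def fun_eq_iff)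
  moreover have "supp (\<lambda>_. 0) = {}" by (simp add: supp_def)
  ultimately show ?thesis by (simp add: Bs_def mfact_def mpow_def Dq_zero)
qed

lemma boundRHS_Bs: "boundRHS c0 c q \<beta> \<nu> = c0 * c ^ msize \<nu> * Bs q \<beta> \<nu>"
  by (simp add: boundRHS_def Bs_def)

theorem lemmaA1:
  fixes c0 c :: real and q :: enat and \<beta> :: "nat \<Rightarrow> real" and \<Upsilon> :: "mi \<Rightarrow> real"
  assumes "c0 > 0" and "c > 0" and "q \<ge> 1"
    and "\<And>j. \<beta> j \<ge> 0"
    and "\<And>\<nu>. finsupp \<nu> \<Longrightarrow> \<Upsilon> \<nu> \<ge> 0"
    and "\<Upsilon> (\<lambda>_. 0) \<le> c0"
    and "\<And>\<nu>. finsupp \<nu> \<Longrightarrow> \<nu> \<noteq> (\<lambda>_. 0) \<Longrightarrow> \<Upsilon> \<nu> \<le> recRHS c q \<beta> \<Upsilon> \<nu>"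
  shows "(\<forall>\<nu>. finsupp \<nu> \<longrightarrow> \<Upsilon> \<nu> \<le> boundRHS c0 c q \<beta> \<nu>)
    \<and> ((\<Upsilon> (\<lambda>_. 0) = c0 \<and>
         (\<forall>\<nu>. finsupp \<nu> \<and> \<nu> \<noteq> (\<lambda>_. 0) \<longrightarrow> \<Upsilon> \<nu> = recRHS c q \<beta> \<Upsilon> \<nu>))
       \<longrightarrow> (\<forall>\<nu>. finsupp \<nu> \<longrightarrow> \<Upsilon> \<nu> = boundRHS c0 c q \<beta> \<nu>))"
proof -
  define R where "R = (\<lambda>\<nu>. {m. mle m \<nu> \<and> m \<noteq> (\<lambda>_. 0) \<and> enat (card (supp m)) \<le> q})"
  have cpos: "c > 0" by (rule assms(2))
  have nn: "0 \<le> c ^ msize m * mbinom \<nu> m" "0 \<le> (\<Prod>j\<in>supp m. \<beta> j)" for m \<nu>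
    using cpos assms(4) by (auto simp: mbinom_def intro!: prod_nonneg mult_nonneg_nonneg)
  have split: "c ^ msize m * mbinom \<nu> m * (c0 * c ^ msize (msub \<nu> m) * Bs q \<beta> (msub \<nu> m)) * (\<Prod>j\<in>supp m. \<beta> j)
      = c0 * c ^ msize \<nu> * (mbinom \<nu> m * Bs q \<beta> (msub \<nu> m) * (\<Prod>j\<in>supp m. \<beta> j))"
    if "finsupp \<nu>" "m \<in> R \<nu>" for \<nu> m
  proof -
    have "msize \<nu> = msize m + msize (msub \<nu> m)" using that by (intro msize_split) (auto simp: R_def)
    then show ?thesis by (simp add: power_add mult_ac)
  qed
  have sumeq: "(\<Sum>m\<in>R \<nu>. c ^ msize m * mbinom \<nu> m * (c0 * c ^ msize (msub \<nu> m) * Bs q \<beta> (msub \<nu> m)) * (\<Prod>j\<in>supp m. \<beta> j))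
      = c0 * c ^ msize \<nu> * Bs q \<beta> \<nu>" if "finsupp \<nu>" "\<nu> \<noteq> (\<lambda>_. 0)" for \<nu>
    using that by (simp add: split sum_distrib_left[symmetric] key R_def)
  have rec: "recRHS c q \<beta> \<Upsilon> \<nu> = (\<Sum>m\<in>R \<nu>. c ^ msize m * mbinom \<nu> m * \<Upsilon> (msub \<nu> m) * (\<Prod>j\<in>supp m. \<beta> j))" for \<nu>
    by (simp add: recRHS_def R_def)
  have lessR: "finsupp (msub \<nu> m) \<and> msize (msub \<nu> m) < msize \<nu>" if "finsupp \<nu>" "m \<in> R \<nu>" for \<nu> m
    using that by (auto simp: R_def intro: msub_finsupp msize_less)
  have A: "\<Upsilon> \<nu> \<le> c0 * c ^ msize \<nu> * Bs q \<beta> \<nu>" if "finsupp \<nu>" for \<nu>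
    using that
  proof (induction "msize \<nu>" arbitrary: \<nu> rule: less_induct)
    case less
    show ?case
    proof (cases "\<nu> = (\<lambda>_. 0)")
      case True
      then show ?thesis using assms(6) by (simp add: Bs_zero msize_zero)
    next
      case False
      have "\<Upsilon> \<nu> \<le> recRHS c q \<beta> \<Upsilon> \<nu>" using assms(7) less.prems False by blast
      also have "\<dots> \<le> (\<Sum>m\<in>R \<nu>. c ^ msize m * mbinom \<nu> m * (c0 * c ^ msize (msub \<nu> m) * Bs q \<beta> (msub \<nu> m)) * (\<Prod>j\<in>supp m. \<beta> j))"
        unfolding rec
      proof (rule sum_mono)
        fix m assume m: "m \<in> R \<nu>"
        have "\<Upsilon> (msub \<nu> m) \<le> c0 * c ^ msize (msub \<nu> m) * Bs q \<beta> (msub \<nu> m)"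
          using less.hyps lessR[OF less.prems m] by blast
        then show "c ^ msize m * mbinom \<nu> m * \<Upsilon> (msub \<nu> m) * (\<Prod>j\<in>supp m. \<beta> j) \<le>
            c ^ msize m * mbinom \<nu> m * (c0 * c ^ msize (msub \<nu> m) * Bs q \<beta> (msub \<nu> m)) * (\<Prod>j\<in>supp m. \<beta> j)"
          by (intro mult_right_mono mult_left_mono nn)
      qed
      also have "\<dots> = c0 * c ^ msize \<nu> * Bs q \<beta> \<nu>" using sumeq less.prems False by blast
      finally show ?thesis .
    qed
  qed
  have B: "\<Upsilon> \<nu> = c0 * c ^ msize \<nu> * Bs q \<beta> \<nu>" if "finsupp \<nu>"
    and h0: "\<Upsilon> (\<lambda>_. 0) = c0" and h: "\<forall>\<nu>. finsupp \<nu> \<and> \<nu> \<noteq> (\<lambda>_. 0) \<longrightarrow> \<Upsilon> \<nu> = recRHS c q \<beta> \<Upsilon> \<nu>" for \<nu>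
    using that(1)
  proof (induction "msize \<nu>" arbitrary: \<nu> rule: less_induct)
    case less
    show ?case
    proof (cases "\<nu> = (\<lambda>_. 0)")
      case True
      then show ?thesis using h0 by (simp add: Bs_zero msize_zero)
    next
      case False
      have "\<Upsilon> \<nu> = recRHS c q \<beta> \<Upsilon> \<nu>" using h less.prems False by blast
      also have "\<dots> = (\<Sum>m\<in>R \<nu>. c ^ msize m * mbinom \<nu> m * (c0 * c ^ msize (msub \<nu> m) * Bs q \<beta> (msub \<nu> m)) * (\<Prod>j\<in>supp m. \<beta> j))"
        unfolding rec
      proof (rule sum.cong[OF refl])
        fix m assume m: "m \<in> R \<nu>"
        have "\<Upsilon> (msub \<nu> m) = c0 * c ^ msize (msub \<nu> m) * Bs q \<beta> (msub \<nu> m)"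
          using less.hyps lessR[OF less.prems m] by blast
        then show "c ^ msize m * mbinom \<nu> m * \<Upsilon> (msub \<nu> m) * (\<Prod>j\<in>supp m. \<beta> j) =
            c ^ msize m * mbinom \<nu> m * (c0 * c ^ msize (msub \<nu> m) * Bs q \<beta> (msub \<nu> m)) * (\<Prod>j\<in>supp m. \<beta> j)"
          by simp
      qed
      also have "\<dots> = c0 * c ^ msize \<nu> * Bs q \<beta> \<nu>" using sumeq less.prems False by blast
      finally show ?thesis .
    qed
  qed
  show ?thesis
  proof (intro conjI allI impI)
    fix \<nu> assume "finsupp \<nu>"
    then show "\<Upsilon> \<nu> \<le> boundRHS c0 c q \<beta> \<nu>" unfolding boundRHS_Bs by (rule A)
  next
    fix \<nu> assume h: "\<Upsilon> (\<lambda>_. 0) = c0 \<and> (\<forall>\<nu>. finsupp \<nu> \<and> \<nu> \<noteq> (\<lambda>_. 0) \<longrightarrow> \<Upsilon> \<nu> = recRHS c q \<beta> \<Upsilon> \<nu>)"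
      and f: "finsupp \<nu>"
    show "\<Upsilon> \<nu> = boundRHS c0 c q \<beta> \<nu>" unfolding boundRHS_Bs
      using B[OF f] h by blast
  qed
qed


end
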